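(* Every $4$-dimensional Acaa-algebra over a field $\mathbb K$ of characteristic $0$ is isomorphic to one of the following: (1) the $4$-dimensional abelian algebra; (2) the $4$-dimensional $2$-step nilpotent Lie algebra $\mathcal H_3\oplus\mathbb K$, given in a basis $\{e_1,e_2,e_3,e_4\}$ by $[e_1,e_2]=e_3$ and all other brackets of basis vectors (not determined by anticommutativity) zero.
   Context: An Acaa-algebra over a field $\mathbb K$ of characteristic $0$ is a $\mathbb K$-vector space $A$ with a bilinear product $[\cdot,\cdot]$ which is anticommutative, $[x,y]=-[y,x]$, and satisfies $[x_1,[x_2,x_3]]=[x_2,[x_3,x_1]]$ for all $x_1,x_2,x_3\in A$. Isomorphism means a linear bijection preserving the bracket. *)

theory Defs
  imports "HOL-Analysis.Analysis" "HOL-Library.Numeral_Type"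
begin

text \<open>An algebra is given by a vector space structure (scalar multiplication s over a
field 'k on the additive group 'v) together with a bilinear bracket br.\<close>

definition bilinear_bracket :: "('k::field \<Rightarrow> 'v \<Rightarrow> 'v) \<Rightarrow> ('v::ab_group_add \<Rightarrow> 'v \<Rightarrow> 'v) \<Rightarrow> bool" where
  "bilinear_bracket s br \<longleftrightarrow>
     (\<forall>x. Vector_Spaces.linear s s (br x)) \<and> (\<forall>y. Vector_Spaces.linear s s (\<lambda>x. br x y))"

definition acaa_algebra :: "('k::field \<Rightarrow> 'v \<Rightarrow> 'v) \<Rightarrow> ('v::ab_group_add \<Rightarrow> 'v \<Rightarrow> 'v) \<Rightarrow> bool" where
  "acaa_algebra s br \<longleftrightarrow> vector_space s \<and> bilinear_bracket s br \<and>
     (\<forall>x y. br x y = - br y x) \<and>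
     (\<forall>x1 x2 x3. br x1 (br x2 x3) = br x2 (br x3 x1))"

definition algebra_iso ::
  "('k::field \<Rightarrow> 'v \<Rightarrow> 'v) \<Rightarrow> ('v::ab_group_add \<Rightarrow> 'v \<Rightarrow> 'v) \<Rightarrow>
   ('k \<Rightarrow> 'w \<Rightarrow> 'w) \<Rightarrow> ('w::ab_group_add \<Rightarrow> 'w \<Rightarrow> 'w) \<Rightarrow> ('v \<Rightarrow> 'w) \<Rightarrow> bool" where
  "algebra_iso s1 br1 s2 br2 f \<longleftrightarrow> Vector_Spaces.linear s1 s2 f \<and> bij f \<and>
     (\<forall>x y. f (br1 x y) = br2 (f x) (f y))"

definition algebras_isomorphic ::
  "('k::field \<Rightarrow> 'v \<Rightarrow> 'v) \<Rightarrow> ('v::ab_group_add \<Rightarrow> 'v \<Rightarrow> 'v) \<Rightarrow>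
   ('k \<Rightarrow> 'w \<Rightarrow> 'w) \<Rightarrow> ('w::ab_group_add \<Rightarrow> 'w \<Rightarrow> 'w) \<Rightarrow> bool" where
  "algebras_isomorphic s1 br1 s2 br2 \<longleftrightarrow> (\<exists>f. algebra_iso s1 br1 s2 br2 f)"

text \<open>Model algebras on 'k^4 with standard basis e_i = axis i 1 (indices 1,2,3,4).\<close>

definition abelian4 :: "'k::field ^ 4 \<Rightarrow> 'k ^ 4 \<Rightarrow> 'k ^ 4" where
  "abelian4 x y = 0"

text \<open>H_3 + K: [e1,e2] = e3 = -[e2,e1], all other brackets of basis vectors zero.\<close>
definition heis3_plus_K :: "'k::field ^ 4 \<Rightarrow> 'k ^ 4 \<Rightarrow> 'k ^ 4" where
  "heis3_plus_K x y = (\<chi> i. if i = 3 then x$1 * y$2 - x$2 * y$1 else 0)"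

end

theory Submission
  imports Defs
begin

definition gmap :: "('k::field \<Rightarrow> 'v::ab_group_add \<Rightarrow> 'v) \<Rightarrow> 'v \<Rightarrow> 'v \<Rightarrow> 'v \<Rightarrow> 'v \<Rightarrow> 'k^4 \<Rightarrow> 'v" where
  "gmap s x1 x2 x3 x4 v = s (v$1) x1 + s (v$2) x2 + s (v$3) x3 + s (v$4) x4"

locale acaa4 =
  fixes s :: "'k::field_char_0 \<Rightarrow> 'v::ab_group_add \<Rightarrow> 'v"
    and br :: "'v \<Rightarrow> 'v \<Rightarrow> 'v"
  assumes acaa: "acaa_algebra s br"
begin

lemma vs: "vector_space s" using acaa unfolding acaa_algebra_def by blast

sublocale V: vector_space s by (rule vs)

lemma linR: "Vector_Spaces.linear s s (br x)"
  using acaa unfolding acaa_algebra_def bilinear_bracket_def by blast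
lemma linL: "Vector_Spaces.linear s s (\<lambda>x. br x y)"
  using acaa unfolding acaa_algebra_def bilinear_bracket_def by blast

interpretation VP: vector_space_pair s s by unfold_locales

lemma br_add_r: "br x (y + z) = br x y + br x z"
  using linR[of x] by (rule VP.linear_add)
lemma br_add_l: "br (y + z) x = br y x + br z x"
  using linL[of x] by (rule VP.linear_add)
lemma br_scale_r: "br x (s c y) = s c (br x y)"
  using linR[of x] by (rule VP.linear_scale)
lemma br_scale_l: "br (s c y) x = s c (br y x)"
  using linL[of x] by (rule VP.linear_scale)
lemma br_zero_r: "br x 0 = 0"
  using linR[of x] by (rule VP.linear_0)
lemma br_zero_l: "br 0 x = 0"
  using linL[of x] by (rule VP.linear_0)
lemma br_neg_r: "br x (- y) = - br x y"
  using linR[of x] by (rule VP.linear_neg)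
lemma br_neg_l: "br (- y) x = - br y x"
  using linL[of x] by (rule VP.linear_neg)
lemma br_diff_r: "br x (y - z) = br x y - br x z"
  using linR[of x] by (rule VP.linear_diff)
lemma br_diff_l: "br (y - z) x = br y x - br z x"
  using linL[of x] by (rule VP.linear_diff)

lemmas br_simps = br_add_r br_add_l br_scale_r br_scale_l br_neg_r br_neg_l br_zero_r br_zero_l
  br_diff_r br_diff_l

lemma anti: "br x y = - br y x" using acaa unfolding acaa_algebra_def by blast
lemma cyc: "br x1 (br x2 x3) = br x2 (br x3 x1)" using acaa unfolding acaa_algebra_def by blast

lemma two_tors: assumes "(x::'v) = - x" shows "x = 0"
proof -
  have "s 2 x = x + x" using V.scale_left_distrib[of 1 1 x] by simp
  also have "\<dots> = 0" using assms eq_neg_iff_add_eq_0 by blast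
  finally show ?thesis by simp
qed

lemma br_self[simp]: "br x x = 0" using anti[of x x] by (rule two_tors)

lemma A_aa[simp]: "br a (br a y) = 0"
proof -
  have "br a (br a y) = br a (br y a)" using cyc[of a a y] .
  also have "\<dots> = - br a (br a y)" using anti[of y a] br_neg_r by simp
  finally show ?thesis by (rule two_tors)
qed

lemma A_aba[simp]: "br a (br y a) = 0"
  using anti[of y a] br_neg_r by simp

definition G where "G x z u v = br x (br z (br u v))"

lemma G_eq: "G x z u v = br (br u v) (br x z)"
  unfolding G_def using cyc[of x z "br u v"] cyc[of z "br u v" x] by simp

lemma s12: "G x z u v = - G z x u v"
  unfolding G_eq using anti[of x z] br_neg_r by simp
lemma s34: "G x z u v = - G x z v u"
  unfolding G_eq using anti[of u v] br_neg_l by simp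
lemma s23: "G x z u v = - G x u z v"
proof -
  have "br z (br u v) = br u (br v z)" by (rule cyc)
  also have "\<dots> = - br u (br z v)" using anti[of v z] br_neg_r by simp
  finally show ?thesis unfolding G_def using br_neg_r by simp
qed

lemma G_zero: "G x z u v = 0"
proof -
  have "G x z u v = G u v x z"
    using s23[of x z u v] s12[of x u z v] s34[of u x z v] s23[of u x v z] by simp
  moreover have "G x z u v = - G u v x z"
    unfolding G_eq using anti[of "br u v" "br x z"] by simp
  ultimately have "G x z u v = - G x z u v" by simp
  then show ?thesis by (rule two_tors)
qed

lemma four_zero[simp]: "br (br u v) (br x z) = 0"
  using G_zero G_eq by simp
lemma four_zero'[simp]: "br x (br z (br u v)) = 0"
  using G_zero G_def by simp

end

locale acaa4d = acaa4 s br for s :: "'k::field_char_0 \<Rightarrow> 'v::ab_group_add \<Rightarrow> 'v" and br +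
  assumes dim4: "vector_space.dim s (UNIV :: 'v set) = 4"
begin

interpretation VP: vector_space_pair s s by unfold_locales

lemma basis_ex: obtains B where "V.independent B" "UNIV \<subseteq> V.span B" "card B = 4" "finite B"
proof -
  obtain B where "B \<subseteq> UNIV" "V.independent B" "UNIV \<subseteq> V.span B" "card B = V.dim UNIV"
    by (rule V.basis_exists)
  then show ?thesis using that dim4 by (metis card.infinite zero_neq_numeral)
qed

lemma indep_bound: assumes "V.independent S" shows "finite S \<and> card S \<le> 4"
proof -
  obtain B where B: "V.independent B" "UNIV \<subseteq> V.span B" "card B = 4" "finite B" by (rule basis_ex)
  show ?thesis using V.independent_span_bound[OF B(4) assms] B by auto
qed

lemma exists_out: assumes "finite T" "card T < 4" shows "\<exists>v. v \<notin> V.span T"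
proof (rule ccontr)
  assume "\<not> ?thesis"
  then have sp: "UNIV \<subseteq> V.span T" by auto
  obtain B where B: "V.independent B" "UNIV \<subseteq> V.span B" "card B = 4" "finite B" by (rule basis_ex)
  show False using V.independent_span_bound[OF assms(1) B(1)] sp B(3) assms(2) by auto
qed

lemma notin_span:
  assumes "Vector_Spaces.linear s s L" "\<And>x. x \<in> S \<Longrightarrow> L x = 0" "L y \<noteq> 0"
  shows "y \<notin> V.span S"
  using VP.linear_eq_0_on_span[OF assms(1), of S y] assms(2,3) by blast

lemma chain_step:
  assumes "x \<notin> V.span S" "V.independent S" "finite S"
  shows "V.independent (insert x S)" "card (insert x S) = Suc (card S)"
  using assms V.independent_insertI V.span_base by (auto simp: card_insert_if)

lemma nil3[simp]: "br a (br b c) = 0"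
proof (rule ccontr)
  define w where "w = br a (br b c)"
  define p where "p = br b c"
  define q where "q = br c a"
  define r where "r = br a b"
  assume "br a (br b c) \<noteq> 0"
  then have w0: "w \<noteq> 0" by (simp add: w_def)
  have wq: "br b q = w" unfolding q_def w_def using cyc[of a b c] by simp
  have wr: "br c r = w" unfolding r_def w_def using cyc[of a b c] cyc[of b c a] by simp
  have wp: "br a p = w" unfolding p_def w_def by simp
  have wpd: "w = br a p" unfolding p_def w_def ..
  have h1: "w \<notin> V.span {}" using w0 by simp
  have h2: "p \<notin> V.span {w}"
  proof (rule notin_span[OF linR[of a]])
    fix x assume "x \<in> {w}"
    then show "br a x = 0" using wpd by simp
  next
    show "br a p \<noteq> 0" using wp w0 by simp
  qed
  have h3: "c \<notin> V.span {p, w}"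
  proof (rule notin_span[OF linR[of r]])
    fix x assume "x \<in> {p, w}"
    then show "br r x = 0" unfolding r_def p_def w_def by auto
  next
    show "br r c \<noteq> 0" using anti[of r c] wr w0 by simp
  qed
  have h4: "b \<notin> V.span {c, p, w}"
  proof (rule notin_span[OF linR[of q]])
    fix x assume "x \<in> {c, p, w}"
    then show "br q x = 0" unfolding q_def p_def w_def
      using anti[of "br c a" c] by auto
  next
    show "br q b \<noteq> 0" using anti[of q b] wq w0 by simp
  qed
  have h5: "a \<notin> V.span {b, c, p, w}"
  proof (rule notin_span[OF linR[of p]])
    fix x assume "x \<in> {b, c, p, w}"
    then show "br p x = 0" unfolding p_def w_def
      using anti[of "br b c" c] anti[of "br b c" b] by auto
  next
    show "br p a \<noteq> 0" using anti[of p a] wp w0 by simp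
  qed
  have i1: "V.independent {w}" "card {w} = 1" using chain_step[OF h1 V.independent_empty] by auto
  have i2: "V.independent {p, w}" "card {p,w} = 2" using chain_step[OF h2 i1(1)] i1(2) by auto
  have i3: "V.independent {c, p, w}" "card {c,p,w} = 3" using chain_step[OF h3 i2(1)] i2(2) by auto
  have i4: "V.independent {b, c, p, w}" "card {b,c,p,w} = 4" using chain_step[OF h4 i3(1)] i3(2) by auto
  have i5: "V.independent {a, b, c, p, w}" "card {a,b,c,p,w} = 5" using chain_step[OF h5 i4(1)] i4(2) by auto
  show False using indep_bound[OF i5(1)] i5(2) by simp
qed


lemma basis4_distinct:
  assumes "card {x1,x2,x3,x4} = 4"
  shows "distinct [x1,x2,x3,x4]"
  using assms by (intro card_distinct) simp

lemma basis4_uniq: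
  assumes ind: "V.independent {x1,x2,x3,x4}" and c: "card {x1,x2,x3,x4} = 4"
    and eq: "s a1 x1 + s a2 x2 + s a3 x3 + s a4 x4 = 0"
  shows "a1 = 0 \<and> a2 = 0 \<and> a3 = 0 \<and> a4 = 0"
proof -
  have d: "distinct [x1,x2,x3,x4]" by (rule basis4_distinct[OF c])
  define u where "u v = (if v = x1 then a1 else if v = x2 then a2 else if v = x3 then a3 else a4)" for v
  have dd: "x1 \<noteq> x2" "x1 \<noteq> x3" "x1 \<noteq> x4" "x2 \<noteq> x3" "x2 \<noteq> x4" "x3 \<noteq> x4"
    using d by auto
  have "(\<Sum>v\<in>{x1,x2,x3,x4}. s (u v) v) = s a1 x1 + s a2 x2 + s a3 x3 + s a4 x4"
    using dd by (simp add: u_def add.assoc)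
  then have S: "(\<Sum>v\<in>{x1,x2,x3,x4}. s (u v) v) = 0" using eq by simp
  have "u v = 0" if "v \<in> {x1,x2,x3,x4}" for v
    using V.independentD[OF ind _ subset_refl S that] by simp
  then have "u x1 = 0" "u x2 = 0" "u x3 = 0" "u x4 = 0" by auto
  then show ?thesis using dd by (simp add: u_def)
qed

lemma basis4_span:
  assumes ind: "V.independent {x1,x2,x3,x4}" and c: "card {x1,x2,x3,x4} = 4"
  shows "\<exists>a1 a2 a3 a4. v = s a1 x1 + s a2 x2 + s a3 x3 + s a4 x4"
proof -
  have "v \<in> V.span {x1,x2,x3,x4}"
  proof (rule ccontr)
    assume "v \<notin> V.span {x1,x2,x3,x4}"
    from chain_step[OF this ind] c have "V.independent (insert v {x1,x2,x3,x4})"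
      "card (insert v {x1,x2,x3,x4}) = 5" by auto
    then show False using indep_bound by fastforce
  qed
  then obtain k1 where "v - s k1 x1 \<in> V.span {x2,x3,x4}" using V.span_breakdown_eq by blast
  then obtain k2 where "v - s k1 x1 - s k2 x2 \<in> V.span {x3,x4}" using V.span_breakdown_eq by blast
  then obtain k3 where "v - s k1 x1 - s k2 x2 - s k3 x3 \<in> V.span {x4}" using V.span_breakdown_eq by blast
  then obtain k4 where "v - s k1 x1 - s k2 x2 - s k3 x3 - s k4 x4 \<in> V.span {}" using V.span_breakdown_eq by blast
  then have "v = s k1 x1 + s k2 x2 + s k3 x3 + s k4 x4" by (simp add: algebra_simps)
  then show ?thesis by blast
qed

lemma iso_basis:
  assumes ind: "V.independent {x1,x2,x3,x4}" and c: "card {x1,x2,x3,x4} = 4"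
    and hom: "\<And>a b. gmap s x1 x2 x3 x4 (M a b) = br (gmap s x1 x2 x3 x4 a) (gmap s x1 x2 x3 x4 b)"
  shows "algebras_isomorphic s br ((*s) :: 'k \<Rightarrow> 'k^4 \<Rightarrow> 'k^4) M"
proof -
  let ?g = "gmap s x1 x2 x3 x4"
  have lin: "Vector_Spaces.linear ((*s) :: 'k \<Rightarrow> 'k^4 \<Rightarrow> 'k^4) s ?g"
    unfolding Vector_Spaces.linear_iff
  proof (intro conjI allI)
    show "vector_space ((*s) :: 'k \<Rightarrow> 'k^4 \<Rightarrow> 'k^4)" by (rule vec.vector_space_axioms)
    show "vector_space s" by (rule vs)
    fix v w :: "'k^4"
    show "?g (v + w) = ?g v + ?g w"
      by (simp add: gmap_def V.scale_left_distrib algebra_simps)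
    fix c :: 'k
    show "?g (c *s v) = s c (?g v)"
      by (simp add: gmap_def V.scale_right_distrib V.scale_scale)
  qed
  have inj: "inj ?g"
  proof (rule injI)
    fix v w :: "'k^4" assume "?g v = ?g w"
    then have "s (v$1 - w$1) x1 + s (v$2 - w$2) x2 + s (v$3 - w$3) x3 + s (v$4 - w$4) x4 = 0"
      by (simp add: gmap_def V.scale_left_diff_distrib algebra_simps)
    from basis4_uniq[OF ind c this] show "v = w"
      by (simp add: vec_eq_iff forall_4)
  qed
  have surj: "surj ?g"
  unfolding surj_def
  proof
    fix v
    from basis4_span[OF ind c] obtain a1 a2 a3 a4 where v: "v = s a1 x1 + s a2 x2 + s a3 x3 + s a4 x4"
      by blast
    have "v = ?g (\<chi> i. if i = 1 then a1 else if i = 2 then a2 else if i = 3 then a3 else a4)"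
      by (simp add: gmap_def v)
    then show "\<exists>x. v = ?g x" by (rule exI)
  qed
  have bij: "bij ?g" using inj surj by (rule bijI)
  have lininv: "Vector_Spaces.linear s ((*s) :: 'k \<Rightarrow> 'k^4 \<Rightarrow> 'k^4) (inv ?g)"
  proof -
    have "module_hom ((*s) :: 'k \<Rightarrow> 'k^4 \<Rightarrow> 'k^4) s ?g" using lin by (simp only: module_hom_iff_linear)
    from bij_module_hom_imp_inv_module_hom[OF this bij]
    show ?thesis by (simp only: module_hom_iff_linear)
  qed
  have "algebra_iso s br ((*s) :: 'k \<Rightarrow> 'k^4 \<Rightarrow> 'k^4) M (inv ?g)"
    unfolding algebra_iso_def
  proof (intro conjI allI)
    show "Vector_Spaces.linear s (*s) (inv ?g)" by (rule lininv)
    show "bij (inv ?g)" using bij by (rule bij_imp_bij_inv)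
    fix a b
    have ga: "?g (inv ?g a) = a" by (rule surj_f_inv_f[OF surj])
    have gb: "?g (inv ?g b) = b" by (rule surj_f_inv_f[OF surj])
    have "?g (M (inv ?g a) (inv ?g b)) = br a b"
      using hom[of "inv ?g a" "inv ?g b"] unfolding ga gb .
    then have "inv ?g (?g (M (inv ?g a) (inv ?g b))) = inv ?g (br a b)" by (rule arg_cong)
    then show "inv ?g (br a b) = M (inv ?g a) (inv ?g b)"
      unfolding inv_f_f[OF inj] by (rule sym)
  qed
  then show ?thesis unfolding algebras_isomorphic_def by blast
qed


lemma classify_abelian:
  assumes ab: "\<And>x y. br x y = 0"
  shows "algebras_isomorphic s br ((*s) :: 'k \<Rightarrow> 'k^4 \<Rightarrow> 'k^4) abelian4"
proof -
  obtain x1 where h1: "x1 \<notin> V.span {}" using exists_out[of "{}"] by auto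
  have i1: "V.independent {x1}" "card {x1} = 1" using chain_step[OF h1 V.independent_empty] by auto
  obtain x2 where h2: "x2 \<notin> V.span {x1}" using exists_out[of "{x1}"] i1 by auto
  have i2: "V.independent {x2,x1}" "card {x2,x1} = 2" using chain_step[OF h2 i1(1)] i1(2) by auto
  obtain x3 where h3: "x3 \<notin> V.span {x2,x1}" using exists_out[of "{x2,x1}"] i2 by auto
  have i3: "V.independent {x3,x2,x1}" "card {x3,x2,x1} = 3" using chain_step[OF h3 i2(1)] i2(2) by auto
  obtain x4 where h4: "x4 \<notin> V.span {x3,x2,x1}" using exists_out[of "{x3,x2,x1}"] i3 by auto
  have i4: "V.independent {x4,x3,x2,x1}" "card {x4,x3,x2,x1} = 4" using chain_step[OF h4 i3(1)] i3(2) by auto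
  show ?thesis
  proof (rule iso_basis[OF i4])
    fix a b :: "'k^4"
    show "gmap s x4 x3 x2 x1 (abelian4 a b) = br (gmap s x4 x3 x2 x1 a) (gmap s x4 x3 x2 x1 b)"
      by (simp add: ab abelian4_def gmap_def)
  qed
qed

lemma classify_heis:
  assumes nz: "br x y \<noteq> 0"
  shows "algebras_isomorphic s br ((*s) :: 'k \<Rightarrow> 'k^4 \<Rightarrow> 'k^4) heis3_plus_K"
proof -
  define z where "z = br x y"
  have zd: "br x y = z" unfolding z_def ..
  have z0: "z \<noteq> 0" using nz zd by simp
  have bxz: "br x z = 0" unfolding z_def by simp
  have byz: "br y z = 0" unfolding z_def by simp
  have bvz: "br v z = 0" for v unfolding z_def by simp
  have bzv: "br z v = 0" for v using anti[of z v] bvz by simp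
  have byx: "br y x = - z" using anti[of y x] zd by simp
  have h1: "z \<notin> V.span {}" using z0 by simp
  have h2: "y \<notin> V.span {z}"
  proof (rule notin_span[OF linR[of x]])
    fix v assume "v \<in> {z}" then show "br x v = 0" using bxz by simp
  next
    show "br x y \<noteq> 0" using nz .
  qed
  have h3: "x \<notin> V.span {y, z}"
  proof (rule notin_span[OF linR[of y]])
    fix v assume "v \<in> {y, z}" then show "br y v = 0" using byz by auto
  next
    show "br y x \<noteq> 0" using byx z0 by simp
  qed
  have i1: "V.independent {z}" "card {z} = 1" using chain_step[OF h1 V.independent_empty] by auto
  have i2: "V.independent {y,z}" "card {y,z} = 2" using chain_step[OF h2 i1(1)] i1(2) by auto
  have i3: "V.independent {x,y,z}" "card {x,y,z} = 3" using chain_step[OF h3 i2(1)] i2(2) by auto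
  obtain u0 where h4: "u0 \<notin> V.span {x,y,z}" using exists_out[of "{x,y,z}"] i3 by auto
  have i4: "V.independent {u0,x,y,z}" "card {u0,x,y,z} = 4" using chain_step[OF h4 i3(1)] i3(2) by auto
  note U = basis4_uniq[OF i4]
  obtain al be ga de where e1: "br x u0 = s al u0 + s be x + s ga y + s de z"
    using basis4_span[OF i4] by blast
  obtain al' be' ga' de' where e2: "br y u0 = s al' u0 + s be' x + s ga' y + s de' z"
    using basis4_span[OF i4] by blast
  have q1: "br x (s al u0 + s be x + s ga y + s de z) = 0" using nil3[of x x u0] unfolding e1 .
  have "s al (br x u0) + s ga z = 0" using q1 by (simp add: br_simps zd bxz)
  moreover have "s (al*al) u0 + s (al*be) x + s (al*ga) y + s (al*de + ga) z = s al (br x u0) + s ga z"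
    unfolding e1 by (simp add: V.scale_right_distrib V.scale_left_distrib V.scale_scale add_ac)
  ultimately have "al * al = 0 \<and> al * de + ga = 0" using U by metis
  then have al0: "al = 0" and ga0: "ga = 0" by auto
  have q2: "br y (s al u0 + s be x + s ga y + s de z) = 0" using nil3[of y x u0] unfolding e1 .
  then have "s be z = 0" using al0 ga0 by (simp add: br_simps byz byx)
  then have be0: "be = 0" using z0 by simp
  have t1: "br x u0 = s de z" using e1 al0 be0 ga0 by simp
  have q3: "br y (s al' u0 + s be' x + s ga' y + s de' z) = 0" using nil3[of y y u0] unfolding e2 .
  have "s al' (br y u0) - s be' z = 0" using q3 by (simp add: br_simps byz byx)
  moreover have "s (al'*al') u0 + s (al'*be') x + s (al'*ga') y + s (al'*de' - be') z = s al' (br y u0) - s be' z"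
    unfolding e2 by (simp add: V.scale_right_distrib V.scale_left_diff_distrib V.scale_scale algebra_simps)
  ultimately have "al' * al' = 0 \<and> al' * de' - be' = 0" using U by metis
  then have al0': "al' = 0" and be0': "be' = 0" by auto
  have q4: "br x (s al' u0 + s be' x + s ga' y + s de' z) = 0" using nil3[of x y u0] unfolding e2 .
  then have "s ga' z = 0" using al0' be0' by (simp add: br_simps bxz zd)
  then have ga0': "ga' = 0" using z0 by simp
  have t2: "br y u0 = s de' z" using e2 al0' be0' ga0' by simp
  define u where "u = u0 + s de' x - s de y"
  have bxu: "br x u = 0" unfolding u_def by (simp add: br_simps t1 zd)
  have byu: "br y u = 0" unfolding u_def by (simp add: br_simps t2 byx)
  have bux: "br u x = 0" using anti[of u x] bxu by simp
  have buy: "br u y = 0" using anti[of u y] byu by simp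
  have h5: "u \<notin> V.span {x,y,z}"
  proof
    assume "u \<in> V.span {x,y,z}"
    moreover have "s de' x \<in> V.span {x,y,z}" by (intro V.span_scale V.span_base) simp
    moreover have "s de y \<in> V.span {x,y,z}" by (intro V.span_scale V.span_base) simp
    ultimately have "u - s de' x + s de y \<in> V.span {x,y,z}" by (intro V.span_add V.span_diff)
    moreover have "u - s de' x + s de y = u0" unfolding u_def by simp
    ultimately show False using h4 by simp
  qed
  have i5: "V.independent {u,x,y,z}" "card {u,x,y,z} = 4" using chain_step[OF h5 i3(1)] i3(2) by auto
  have i6: "V.independent {x,y,z,u}" "card {x,y,z,u} = 4" using i5 by (simp_all add: insert_commute)
  show ?thesis
  proof (rule iso_basis[OF i6])
    fix a b :: "'k^4"
    show "gmap s x y z u (heis3_plus_K a b) = br (gmap s x y z u a) (gmap s x y z u b)"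
      by (simp add: heis3_plus_K_def gmap_def br_simps zd byx bxz byz bvz bzv bxu byu bux buy
          V.scale_scale V.scale_left_diff_distrib mult.commute)
  qed
qed

lemma classify:
  shows "algebras_isomorphic s br ((*s) :: 'k \<Rightarrow> 'k^4 \<Rightarrow> 'k^4) abelian4
       \<or> algebras_isomorphic s br ((*s) :: 'k \<Rightarrow> 'k^4 \<Rightarrow> 'k^4) heis3_plus_K"
proof (cases "\<forall>x y. br x y = 0")
  case True
  then show ?thesis using classify_abelian by blast
next
  case False
  then obtain x y where "br x y \<noteq> 0" by blast
  then show ?thesis using classify_heis by blast
qed

end

theorem mainTheorem4:
  fixes s :: "'k::field_char_0 \<Rightarrow> 'v::ab_group_add \<Rightarrow> 'v"
    and br :: "'v \<Rightarrow> 'v \<Rightarrow> 'v"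
  assumes "acaa_algebra s br"
    and "vector_space.dim s (UNIV :: 'v set) = 4"
  shows "algebras_isomorphic s br ((*s) :: 'k \<Rightarrow> 'k^4 \<Rightarrow> 'k^4) abelian4
       \<or> algebras_isomorphic s br ((*s) :: 'k \<Rightarrow> 'k^4 \<Rightarrow> 'k^4) heis3_plus_K"
proof -
  interpret A: acaa4d s br
    by (rule acaa4d.intro[OF acaa4.intro[OF assms(1)] acaa4d_axioms.intro[OF assms(2)]])
  show ?thesis by (rule A.classify)
qed

end
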